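(* Let $T>0$ and let $\mathbf{v}=(v^1,v^2,v^3):[0,\infty)\times[0,T]\to\mathbb{R}^3$ be a smooth solution (all derivatives continuous up to $s=0$) of the initial-boundary value problem \[ \mathbf{v}_t=\mathbf{v}\times\mathbf{v}_{ss}\ (s>0,\ t>0),\qquad \mathbf{v}(s,0)=\mathbf{v}_0(s)\ (s>0),\qquad \mathbf{v}(0,t)=\mathbf{e}_3\ (t>0), \] where $\mathbf{e}_3=(0,0,1)$ and the initial datum satisfies $|\mathbf{v}_0(s)|=1$ for all $s\ge 0$. Then for every $n\in\mathbb{N}=\{1,2,\dots\}$ and every $t\in(0,T]$: \[ (C)_n:\quad \bigl(\mathbf{v}\times\partial_s^{2n}\mathbf{v}\bigr)\big|_{s=0}=\mathbf{0}, \] \[ (D)_n:\quad \bigl(\partial_s^{j}\mathbf{v}\cdot\partial_s^{l}\mathbf{v}\bigr)\big|_{s=0}=0\quad\text{for all nonnegative integers } j,l \text{ with } j+l=2n+1. \]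
   Context: $\times$ denotes the exterior (cross) product in $\mathbb{R}^3$ and $\cdot$ the Euclidean inner product; $|_{s=0}$ denotes the trace at $s=0$. *)

theory Defs
  imports "HOL-Analysis.Analysis"
begin

end

theory Submission
  imports Defs "HOL-Analysis.Analysis"
begin

lemma binom_shift_identity:
  fixes h :: "nat \<Rightarrow> nat \<Rightarrow> 'b::real_vector"
  shows "(\<Sum>i\<le>m. real (m choose i) *\<^sub>R (h i (Suc (m - i)) + h (Suc i) (m - i)))
       = (\<Sum>i\<le>Suc m. real (Suc m choose i) *\<^sub>R h i (Suc m - i))"
proof -
  have R: "(\<Sum>i\<le>Suc m. real (Suc m choose i) *\<^sub>R h i (Suc m - i))
     = h 0 (Suc m) + (\<Sum>i\<le>m. real (m choose i) *\<^sub>R h (Suc i) (m - i))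
        + (\<Sum>i\<le>m. real (m choose Suc i) *\<^sub>R h (Suc i) (m - i))"
    apply (subst sum.atMost_Suc_shift)
    by (simp del: sum.atMost_Suc add: sum.distrib scaleR_add_left)
  have A: "(\<Sum>i\<le>m. real (m choose i) *\<^sub>R h i (Suc (m - i)))
     = h 0 (Suc m) + (\<Sum>i<m. real (m choose Suc i) *\<^sub>R h (Suc i) (m - i))"
    by (simp add: sum.atMost_shift Suc_diff_Suc)
  have B: "(\<Sum>i\<le>m. real (m choose Suc i) *\<^sub>R h (Suc i) (m - i))
     = (\<Sum>i<m. real (m choose Suc i) *\<^sub>R h (Suc i) (m - i))"
    by (simp add: lessThan_Suc_atMost[symmetric])
  show ?thesis using R A B by (simp add: sum.distrib scaleR_add_right)
qed

lemma leibniz_deriv: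
  fixes f :: "nat \<Rightarrow> real \<Rightarrow> 'a::real_normed_vector" and g :: "nat \<Rightarrow> real \<Rightarrow> 'b::real_normed_vector"
    and prod :: "'a \<Rightarrow> 'b \<Rightarrow> 'c::real_normed_vector"
  assumes bb: "bounded_bilinear prod"
    and df: "\<And>i y. y \<in> S \<Longrightarrow> (f i has_vector_derivative f (Suc i) y) (at y within S)"
    and dg: "\<And>i y. y \<in> S \<Longrightarrow> (g i has_vector_derivative g (Suc i) y) (at y within S)"
    and x: "x \<in> S"
  shows "((\<lambda>y. \<Sum>i\<le>m. real (m choose i) *\<^sub>R prod (f i y) (g (m - i) y)) has_vector_derivative
           (\<Sum>i\<le>Suc m. real (Suc m choose i) *\<^sub>R prod (f i x) (g (Suc m - i) x))) (at x within S)"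
proof -
  have "((\<lambda>y. \<Sum>i\<le>m. real (m choose i) *\<^sub>R prod (f i y) (g (m - i) y)) has_vector_derivative
           (\<Sum>i\<le>m. real (m choose i) *\<^sub>R (prod (f i x) (g (Suc (m - i)) x) + prod (f (Suc i) x) (g (m - i) x)))) (at x within S)"
  proof (rule has_vector_derivative_sum)
    fix i assume "i \<in> {..m}"
    have d: "((\<lambda>y. prod (f i y) (g (m - i) y)) has_vector_derivative
        prod (f i x) (g (Suc (m - i)) x) + prod (f (Suc i) x) (g (m - i) x)) (at x within S)"
      using bounded_bilinear.has_vector_derivative[OF bb df[OF x, of i] dg[OF x, of "m-i"]] .
    show "((\<lambda>y. real (m choose i) *\<^sub>R prod (f i y) (g (m - i) y)) has_vector_derivative
        real (m choose i) *\<^sub>R (prod (f i x) (g (Suc (m - i)) x) + prod (f (Suc i) x) (g (m - i) x))) (at x within S)"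
      using has_vector_derivative_scaleR[OF DERIV_const d] by simp
  qed
  then show ?thesis
    using binom_shift_identity[of m "\<lambda>i j. prod (f i x) (g j x)"] by simp
qed

lemma deriv_unique_right:
  fixes f g :: "real \<Rightarrow> 'a::real_normed_vector"
  assumes f: "(f has_vector_derivative f') (at x within S)"
    and g: "(g has_vector_derivative g') (at x within S)"
    and d: "d > 0" and sub: "{x..x+d} \<subseteq> S" and eq: "\<And>y. y \<in> {x..x+d} \<Longrightarrow> f y = g y"
  shows "f' = g'"
proof -
  have 1: "(f has_vector_derivative f') (at x within {x..x+d})"
    using has_vector_derivative_within_subset[OF f sub] .
  have 2: "(f has_vector_derivative g') (at x within {x..x+d})"
    by (rule has_vector_derivative_transform[of x _ _ g])
       (use d eq has_vector_derivative_within_subset[OF g sub] in auto)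
  show ?thesis
    by (rule vector_derivative_unique_within[OF _ 1 2]) (use d in \<open>simp add: at_within_Icc_at_right\<close>)
qed

lemma deriv_unique_left:
  fixes f g :: "real \<Rightarrow> 'a::real_normed_vector"
  assumes f: "(f has_vector_derivative f') (at x within S)"
    and g: "(g has_vector_derivative g') (at x within S)"
    and d: "d > 0" and sub: "{x-d..x} \<subseteq> S" and eq: "\<And>y. y \<in> {x-d..x} \<Longrightarrow> f y = g y"
  shows "f' = g'"
proof -
  have 1: "(f has_vector_derivative f') (at x within {x-d..x})"
    using has_vector_derivative_within_subset[OF f sub] .
  have 2: "(f has_vector_derivative g') (at x within {x-d..x})"
    by (rule has_vector_derivative_transform[of x _ _ g])
       (use d eq has_vector_derivative_within_subset[OF g sub] in auto)
  show ?thesis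
    by (rule vector_derivative_unique_within[OF _ 1 2]) (use d in \<open>simp add: at_within_Icc_at_left\<close>)
qed

lemma cont_extend0:
  fixes f g :: "real \<Rightarrow> 'a::real_normed_vector"
  assumes f: "continuous (at 0 within {0..}) f" and g: "continuous (at 0 within {0..}) g"
    and eq: "\<And>y. y > 0 \<Longrightarrow> f y = g y"
  shows "f 0 = g 0"
proof -
  have f1: "(f \<longlongrightarrow> f 0) (at_right 0)"
    using continuous_within_subset[OF f, of "{0..1}"]
    by (simp add: at_within_Icc_at_right continuous_within)
  have g1: "(g \<longlongrightarrow> g 0) (at_right 0)"
    using continuous_within_subset[OF g, of "{0..1}"]
    by (simp add: at_within_Icc_at_right continuous_within)
  have "(f \<longlongrightarrow> g 0) (at_right 0)"
    by (rule Lim_transform_eventually[OF g1]) (use eventually_at_right_less[of "0::real"] eq in \<open>auto elim: eventually_mono\<close>)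
  then show ?thesis using f1 tendsto_unique[OF trivial_limit_at_right_real] by blast
qed

lemma inner3_zero:
  fixes x y :: "real^3"
  shows "x$1 = 0 \<Longrightarrow> x$2 = 0 \<Longrightarrow> y$3 = 0 \<Longrightarrow> x \<bullet> y = 0"
    and "x$1 = 0 \<Longrightarrow> x$2 = 0 \<Longrightarrow> y$3 = 0 \<Longrightarrow> y \<bullet> x = 0"
  by (simp_all add: inner_vec_def sum_3)

lemma cross3_par:
  fixes x y :: "real^3"
  shows "x$1 = 0 \<Longrightarrow> x$2 = 0 \<Longrightarrow> y$1 = 0 \<Longrightarrow> y$2 = 0 \<Longrightarrow> cross3 x y = 0"
    and "x$3 = 0 \<Longrightarrow> y$3 = 0 \<Longrightarrow> (cross3 x y)$1 = 0"
    and "x$3 = 0 \<Longrightarrow> y$3 = 0 \<Longrightarrow> (cross3 x y)$2 = 0"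
    and "x$1 = 0 \<Longrightarrow> x$2 = 0 \<Longrightarrow> (cross3 x y)$1 = - x$3 * y$2"
    and "x$1 = 0 \<Longrightarrow> x$2 = 0 \<Longrightarrow> (cross3 x y)$2 = x$3 * y$1"
  by (simp_all add: cross3_simps)

theorem lemma3p1:
  fixes T :: real
    and v :: "real \<Rightarrow> real \<Rightarrow> real^3"
    and v0 :: "real \<Rightarrow> real^3"
    and D :: "nat \<Rightarrow> nat \<Rightarrow> real \<Rightarrow> real \<Rightarrow> real^3"
  assumes T_pos: "T > 0"
    and D00: "\<And>s t. s \<ge> 0 \<Longrightarrow> t \<in> {0..T} \<Longrightarrow> D 0 0 s t = v s t"
    and D_s: "\<And>j k s t. s \<ge> 0 \<Longrightarrow> t \<in> {0..T} \<Longrightarrow>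
               ((\<lambda>\<sigma>. D j k \<sigma> t) has_vector_derivative D (Suc j) k s t) (at s within {0..})"
    and D_t: "\<And>j k s t. s \<ge> 0 \<Longrightarrow> t \<in> {0..T} \<Longrightarrow>
               ((\<lambda>\<tau>. D j k s \<tau>) has_vector_derivative D j (Suc k) s t) (at t within {0..T})"
    and D_cont: "\<And>j k. continuous_on {(s, t). s \<ge> 0 \<and> t \<in> {0..T}} (\<lambda>(s, t). D j k s t)"
    and pde: "\<And>s t. s > 0 \<Longrightarrow> t \<in> {0<..T} \<Longrightarrow> D 0 1 s t = cross3 (v s t) (D 2 0 s t)"
    and init: "\<And>s. s > 0 \<Longrightarrow> v s 0 = v0 s"
    and bdry: "\<And>t. t \<in> {0<..T} \<Longrightarrow> v 0 t = vector [0, 0, 1]"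
    and unit: "\<And>s. s \<ge> 0 \<Longrightarrow> norm (v0 s) = 1"
  shows "\<forall>n::nat. n \<ge> 1 \<longrightarrow> (\<forall>t \<in> {0<..T}.
           cross3 (v 0 t) (D (2 * n) 0 0 t) = 0 \<and>
           (\<forall>j l. j + l = 2 * n + 1 \<longrightarrow> D j 0 0 t \<bullet> D l 0 0 t = 0))"
proof -
  have v0t: "D 0 0 0 t = vector [0, 0, 1]" if "t \<in> {0<..T}" for t
    using D00[of 0 t] bdry[OF that] that by auto
  have norm1: "D 0 0 s t \<bullet> D 0 0 s t = 1" if s: "s \<ge> 0" and t: "t \<in> {0<..T}" for s t
  proof (cases "s = 0")
    case True
    then show ?thesis using v0t[OF t] by (simp add: inner_vec_def sum_3)
  next
    case False
    with s have s0: "s > 0" by simp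
    define h where "h \<tau> = D 0 0 s \<tau> \<bullet> D 0 0 s \<tau>" for \<tau>
    have hd: "(h has_vector_derivative (D 0 0 s \<tau> \<bullet> D 0 1 s \<tau> + D 0 1 s \<tau> \<bullet> D 0 0 s \<tau>)) (at \<tau> within {0..T})"
      if "\<tau> \<in> {0..T}" for \<tau>
      unfolding h_def
      using bounded_bilinear.has_vector_derivative[OF bounded_bilinear_inner D_t[OF s that, of 0 0] D_t[OF s that, of 0 0]]
      by simp
    have hz: "D 0 0 s \<tau> \<bullet> D 0 1 s \<tau> = 0" if "\<tau> \<in> {0<..T}" for \<tau>
      using pde[OF s0 that] D00[OF s, of \<tau>] that dot_cross_self(1) by auto
    have contT: "continuous_on {0..T} h"
      using hd has_vector_derivative_continuous continuous_on_eq_continuous_within by blast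
    have t0: "0 < t" using t by simp
    have ct: "continuous_on {0..t} h" by (rule continuous_on_subset[OF contT]) (use t in auto)
    have "h t = h 0"
    proof (rule DERIV_isconst_end[OF t0 ct])
      fix x :: real assume x: "0 < x" "x < t"
      have "(h has_vector_derivative (D 0 0 s x \<bullet> D 0 1 s x + D 0 1 s x \<bullet> D 0 0 s x)) (at x)"
        using hd[of x] x t at_within_Icc_at[of 0 x T] by auto
      moreover have "D 0 0 s x \<bullet> D 0 1 s x + D 0 1 s x \<bullet> D 0 0 s x = 0"
        using hz[of x] x t by (simp add: inner_commute)
      ultimately show "DERIV h x :> 0"
        by (simp add: has_real_derivative_iff_has_vector_derivative)
    qed
    moreover have "h 0 = 1"
      using D00[OF s, of 0] init[OF s0] unit[OF s] T_pos
      by (simp add: h_def power2_norm_eq_inner[symmetric])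
    ultimately show ?thesis by (simp add: h_def)
  qed
  have normL: "(\<Sum>i\<le>m. real (m choose i) *\<^sub>R (D i 0 s t \<bullet> D (m - i) 0 s t)) = 0"
    if m: "m \<ge> 1" and t: "t \<in> {0<..T}" and s: "s \<ge> 0" for m t s
  proof -
    define S where "S m \<sigma> = (\<Sum>i\<le>m. real (m choose i) *\<^sub>R (D i 0 \<sigma> t \<bullet> D (m - i) 0 \<sigma> t))" for m \<sigma>
    have tT: "t \<in> {0..T}" using t by auto
    have Sd: "(S m has_vector_derivative S (Suc m) \<sigma>) (at \<sigma> within {0..})" if "\<sigma> \<in> {0..}" for m \<sigma>
      unfolding S_def
      by (rule leibniz_deriv[OF bounded_bilinear_inner, where f="\<lambda>i \<sigma>. D i 0 \<sigma> t" and g="\<lambda>i \<sigma>. D i 0 \<sigma> t"])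
         (use D_s tT that in auto)
    have step: "\<forall>\<sigma>\<ge>0. S (Suc m) \<sigma> = 0" if c: "\<forall>\<sigma>\<ge>0. S m \<sigma> = c" for m c
    proof (intro allI impI)
      fix \<sigma> :: real assume "\<sigma> \<ge> 0"
      show "S (Suc m) \<sigma> = 0"
        by (rule deriv_unique_right[OF Sd has_vector_derivative_const[of c], of \<sigma> 1])
           (use \<open>\<sigma> \<ge> 0\<close> c in auto)
    qed
    have "\<forall>\<sigma>\<ge>0. S (Suc k) \<sigma> = 0" for k
    proof (induction k)
      case 0
      have "\<forall>\<sigma>\<ge>0. S 0 \<sigma> = 1" using norm1 t by (simp add: S_def)
      then show ?case by (rule step)
    next
      case (Suc k)
      then show ?case by (rule step)
    qed
    moreover obtain k where "m = Suc k" using m by (cases m) auto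
    ultimately show ?thesis using s unfolding S_def by blast
  qed
  have pdeL: "D j 1 s t = (\<Sum>i\<le>j. real (j choose i) *\<^sub>R cross3 (D i 0 s t) (D (Suc (Suc (j - i))) 0 s t))"
    if s: "s \<ge> 0" and t: "t \<in> {0<..T}" for j s t
  proof -
    define R where "R j \<sigma> = (\<Sum>i\<le>j. real (j choose i) *\<^sub>R cross3 (D i 0 \<sigma> t) (D (Suc (Suc (j - i))) 0 \<sigma> t))" for j \<sigma>
    have tT: "t \<in> {0..T}" using t by auto
    have Rd: "(R j has_vector_derivative R (Suc j) \<sigma>) (at \<sigma> within {0..})" if "\<sigma> \<in> {0..}" for j \<sigma>
      unfolding R_def
      by (rule leibniz_deriv[OF bilinear_cross[unfolded bilinear_conv_bounded_bilinear], where f="\<lambda>i \<sigma>. D i 0 \<sigma> t" and g="\<lambda>i \<sigma>. D (Suc (Suc i)) 0 \<sigma> t"])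
         (use D_s tT that in auto)
    have pos: "\<forall>\<sigma>>0. D j 1 \<sigma> t = R j \<sigma>" for j
    proof (induction j)
      case 0
      then show ?case using pde t D00 tT by (auto simp: R_def numeral_2_eq_2)
    next
      case (Suc j)
      show ?case
      proof (intro allI impI)
        fix \<sigma> :: real assume "\<sigma> > 0"
        show "D (Suc j) 1 \<sigma> t = R (Suc j) \<sigma>"
          by (rule deriv_unique_right[OF D_s[of \<sigma> t j 1] Rd[of \<sigma> j], of 1])
             (use \<open>\<sigma> > 0\<close> Suc.IH tT in auto)
      qed
    qed
    show ?thesis
    proof (cases "s = 0")
      case True
      have "D j 1 0 t = R j 0"
        by (rule cont_extend0)
           (use pos has_vector_derivative_continuous[OF D_s[of 0 t j 1]] has_vector_derivative_continuous[OF Rd[of 0 j]] tT in auto)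
      then show ?thesis using True by (simp add: R_def)
    next
      case False
      then show ?thesis using pos s by (simp add: R_def)
    qed
  qed
  define A where "A k t \<longleftrightarrow> D (2*k) 0 0 t $ 1 = 0 \<and> D (2*k) 0 0 t $ 2 = 0" for k t
  define B where "B k t \<longleftrightarrow> D (2*k+1) 0 0 t $ 3 = 0" for k t
  have Q: "\<forall>t\<in>{0<..T}. (\<forall>k\<le>n. A k t) \<and> (\<forall>k<n. B k t)" for n
  proof (induction n)
    case 0
    then show ?case using v0t by (simp add: A_def)
  next
    case (Suc n)
    have Bn: "B n t" if t: "t \<in> {0<..T}" for t
    proof -
      define m where "m = Suc (2*n)"
      let ?f = "\<lambda>i. real (m choose i) *\<^sub>R (D i 0 0 t \<bullet> D (m - i) 0 0 t)"
      have z: "?f i = 0" if i: "i \<in> {..m} - {0, m}" for i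
      proof (cases "even i")
        case True
        then obtain a where a: "i = 2*a" by blast
        have "A a t" using Suc.IH t a i m_def by auto
        moreover have "B (n - a) t" using Suc.IH t a i m_def by auto
        moreover have "m - i = 2*(n-a)+1" using a i m_def by auto
        ultimately show ?thesis using inner3_zero(1)[of "D i 0 0 t" "D (m-i) 0 0 t"] a
          by (simp add: A_def B_def)
      next
        case False
        then obtain a where a: "i = 2*a+1" using oddE by blast
        have "B a t" using Suc.IH t a i m_def by auto
        moreover have "A (n - a) t" using Suc.IH t a i m_def by auto
        moreover have "m - i = 2*(n-a)" using a i m_def by auto
        ultimately show ?thesis using inner3_zero(2)[of "D (m-i) 0 0 t" "D i 0 0 t"] a
          by (simp add: A_def B_def)
      qed
      have "sum ?f {..m} = sum ?f {0, m}"
        by (rule sum.mono_neutral_right) (use z in auto)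
      also have "\<dots> = 2 * (D m 0 0 t $ 3)"
        using v0t[OF t] by (simp add: m_def inner_vec_def sum_3)
      finally have "2 * (D m 0 0 t $ 3) = 0"
        using normL[of m t 0] t m_def by simp
      then show ?thesis by (simp add: B_def m_def)
    qed
    have An: "A (Suc n) t" if t: "t \<in> {0<..T}" for t
    proof -
      define j where "j = 2*n"
      have tT: "t \<in> {0..T}" using t by auto
      let ?F = "D j 1 0 t"
      have comp0: "?F $ c = 0" if c: "c = 1 \<or> c = 2" for c
      proof -
        have d1: "((\<lambda>\<tau>. D j 0 0 \<tau> $ c) has_vector_derivative ?F $ c) (at t within {0..T})"
          using bounded_linear.has_vector_derivative[OF bounded_linear_vec_nth D_t[of 0 t j 0]] tT by simp
        show ?thesis
          by (rule deriv_unique_left[OF d1 has_vector_derivative_const[of 0], of "t/2"])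
             (use t Suc.IH c in \<open>auto simp: A_def j_def\<close>)
      qed
      let ?g = "\<lambda>i. real (j choose i) *\<^sub>R cross3 (D i 0 0 t) (D (Suc (Suc (j - i))) 0 0 t)"
      have z: "?g i $ c = 0" if i: "i \<in> {..j} - {0}" and c: "c = 1 \<or> c = 2" for i c
      proof (cases "even i")
        case True
        then obtain a where a: "i = 2*a" by blast
        have "A a t" using Suc.IH t a i j_def by auto
        moreover have "A (Suc n - a) t" using Suc.IH t a i j_def by auto
        moreover have "Suc (Suc (j - i)) = 2*(Suc n - a)" using a i j_def by auto
        ultimately show ?thesis using cross3_par(1)[of "D i 0 0 t" "D (Suc (Suc (j - i))) 0 0 t"] a
          by (simp add: A_def)
      next
        case False
        then obtain a where a: "i = 2*a+1" using oddE by blast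
        have "B a t" using Suc.IH t a i j_def by auto
        moreover have "B (n - a) t"
        proof (cases "a = 0")
          case True then show ?thesis using Bn[OF t] by simp
        next
          case False
          then have "n - a < n" using a i j_def by auto
          then show ?thesis using Suc.IH t by blast
        qed
        moreover have "Suc (Suc (j - i)) = 2*(n-a)+1" using a i j_def by auto
        ultimately show ?thesis using cross3_par(2,3)[of "D i 0 0 t" "D (Suc (Suc (j - i))) 0 0 t"] a c
          by (auto simp: B_def)
      qed
      have sc: "?F $ c = ?g 0 $ c" if c: "c = 1 \<or> c = 2" for c
      proof -
        have "?F $ c = (\<Sum>i\<le>j. ?g i $ c)" using pdeL[of 0 t j] t by simp
        also have "\<dots> = (\<Sum>i\<in>{0}. ?g i $ c)"
          by (rule sum.mono_neutral_right) (use z c in auto)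
        finally show ?thesis by simp
      qed
      have e1: "?g 0 $ 1 = - D (Suc (Suc j)) 0 0 t $ 2"
        using cross3_par(4)[of "D 0 0 0 t" "D (Suc (Suc j)) 0 0 t"] v0t[OF t] by simp
      have e2: "?g 0 $ 2 = D (Suc (Suc j)) 0 0 t $ 1"
        using cross3_par(5)[of "D 0 0 0 t" "D (Suc (Suc j)) 0 0 t"] v0t[OF t] by simp
      have "2 * Suc n = Suc (Suc j)" by (simp add: j_def)
      then show ?thesis using sc[of 1] sc[of 2] comp0[of 1] comp0[of 2] e1 e2 by (simp add: A_def)
    qed
    show ?case
    proof
      fix t assume t: "t \<in> {0<..T}"
      have "\<forall>k\<le>Suc n. A k t"
        using Suc.IH t An[OF t] by (auto simp: le_Suc_eq)
      moreover have "\<forall>k<Suc n. B k t"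
        using Suc.IH t Bn[OF t] by (auto simp: less_Suc_eq)
      ultimately show "(\<forall>k\<le>Suc n. A k t) \<and> (\<forall>k<Suc n. B k t)" by blast
    qed
  qed
  show ?thesis
  proof (intro allI impI ballI conjI)
    fix n :: nat and t assume n: "n \<ge> 1" and t: "t \<in> {0<..T}"
    have QA: "\<And>k. k \<le> Suc n \<Longrightarrow> A k t" and QB: "\<And>k. k < Suc n \<Longrightarrow> B k t"
      using Q[of "Suc n"] t by auto
    show "cross3 (v 0 t) (D (2 * n) 0 0 t) = 0"
      using cross3_par(1)[of "v 0 t" "D (2 * n) 0 0 t"] QA[of n] bdry[OF t] by (simp add: A_def)
    fix j l assume jl: "j + l = 2 * n + 1"
    show "D j 0 0 t \<bullet> D l 0 0 t = 0"
    proof (cases "even j")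
      case True
      then obtain a where a: "j = 2*a" by blast
      have "l = 2*(n-a)+1" using a jl by auto
      then show ?thesis using QA[of a] QB[of "n-a"] a jl inner3_zero(1)[of "D j 0 0 t" "D l 0 0 t"]
        by (auto simp: A_def B_def)
    next
      case False
      then obtain a where a: "j = 2*a+1" using oddE by blast
      have "l = 2*(n-a)" using a jl by auto
      then show ?thesis using QA[of "n-a"] QB[of a] a jl inner3_zero(2)[of "D l 0 0 t" "D j 0 0 t"]
        by (auto simp: A_def B_def)
    qed
  qed
qed

end
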